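(* Let $R$ be an associative ring with identity and involution $*$, and let $a\in R^{\#}\cap R^{\dagger}$. Then $a\in R^{SEP}$ if and only if $a^2a^*a^{\#}\in PE(R)$.
   Context: An involution on $R$ is a map $x\mapsto x^*$ with $(x^* )^*=x$, $(x+y)^*=x^*+y^*$, $(xy)^*=y^*x^*$. An element $a$ is Moore–Penrose invertible if there is $b$ with $aba=a$, $bab=b$, $(ab)^*=ab$, $(ba)^*=ba$; such $b$ is unique, denoted $a^{\dagger}$, and $R^{\dagger}$ is the set of such $a$. An element $a$ is group invertible if there is $b$ with $aba=a$, $bab=b$, $ab=ba$; such $b$ is unique, denoted $a^{\#}$, and $R^{\#}$ is the set of such $a$. $PE(R)=\{e\in R: e^2=e=e^*\}$ is the set of projections. For $a\in R^{\#}\cap R^{\dagger}$, $a$ is SEP if $a^*=a^{\dagger}=a^{\#}$; $R^{SEP}$ denotes the set of SEP elements. *)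

theory Defs
  imports Main
begin

definition involution :: "('a::ring_1 \<Rightarrow> 'a) \<Rightarrow> bool" where
  "involution s \<longleftrightarrow> (\<forall>x. s (s x) = x) \<and> (\<forall>x y. s (x + y) = s x + s y)
      \<and> (\<forall>x y. s (x * y) = s y * s x)"

definition is_mp_inverse :: "('a::ring_1 \<Rightarrow> 'a) \<Rightarrow> 'a \<Rightarrow> 'a \<Rightarrow> bool" where
  "is_mp_inverse s a b \<longleftrightarrow> a * b * a = a \<and> b * a * b = b \<and> s (a * b) = a * b \<and> s (b * a) = b * a"

definition mp_invertible :: "('a::ring_1 \<Rightarrow> 'a) \<Rightarrow> 'a \<Rightarrow> bool" where
  "mp_invertible s a \<longleftrightarrow> (\<exists>b. is_mp_inverse s a b)"

definition mp_inv :: "('a::ring_1 \<Rightarrow> 'a) \<Rightarrow> 'a \<Rightarrow> 'a" where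
  "mp_inv s a = (THE b. is_mp_inverse s a b)"

definition is_group_inverse :: "'a::ring_1 \<Rightarrow> 'a \<Rightarrow> bool" where
  "is_group_inverse a b \<longleftrightarrow> a * b * a = a \<and> b * a * b = b \<and> a * b = b * a"

definition group_invertible :: "'a::ring_1 \<Rightarrow> bool" where
  "group_invertible a \<longleftrightarrow> (\<exists>b. is_group_inverse a b)"

definition group_inv :: "'a::ring_1 \<Rightarrow> 'a" where
  "group_inv a = (THE b. is_group_inverse a b)"

definition projection :: "('a::ring_1 \<Rightarrow> 'a) \<Rightarrow> 'a \<Rightarrow> bool" where
  "projection s e \<longleftrightarrow> e * e = e \<and> e = s e"

definition SEP :: "('a::ring_1 \<Rightarrow> 'a) \<Rightarrow> 'a \<Rightarrow> bool" where
  "SEP s a \<longleftrightarrow> group_invertible a \<and> mp_invertible s a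
      \<and> s a = mp_inv s a \<and> mp_inv s a = group_inv a"

end

theory Submission
  imports Defs
begin

lemma inv_mult: "involution s \<Longrightarrow> s (x * y) = s y * s x"
  by (simp add: involution_def)

lemma inv_inv: "involution s \<Longrightarrow> s (s x) = x"
  by (simp add: involution_def)

lemma A2: "(u::'a::ring_1)*v = t \<Longrightarrow> u*(v*z) = t*z" by (simp add: mult.assoc[symmetric])
lemma A3: "(u::'a::ring_1)*v*w = t \<Longrightarrow> u*(v*(w*z)) = t*z" "(u::'a::ring_1)*v*w = t \<Longrightarrow> u*(v*w) = t"
   by (simp_all add: mult.assoc[symmetric])

lemma group_inv_unique:
  fixes a b c :: "'a::ring_1"
  assumes "is_group_inverse a b" "is_group_inverse a c" shows "b = c"
proof -
  have h: "a*b*a = a" "b*a*b = b" "a*b = b*a" "a*c*a = a" "c*a*c = c" "a*c = c*a"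
    using assms by (auto simp: is_group_inverse_def)
  have "a*b = (a*c*a)*b" using h by simp
  also have "\<dots> = (a*c)*(a*b)" by (simp only: mult.assoc)
  also have "\<dots> = (c*a)*(a*b)" by (simp only: h(6))
  also have "\<dots> = c*(a*(b*a))" by (simp only: h(3) mult.assoc)
  also have "\<dots> = c*(a*b*a)" by (simp only: mult.assoc)
  also have "\<dots> = c * a" using h by simp
  finally have ab: "a*b = a*c" using h by simp
  have "b = b*(a*b)" using h by (simp add: mult.assoc)
  also have "\<dots> = b*(a*c)" using ab by simp
  also have "\<dots> = (a*b)*c" using h by (simp add: mult.assoc)
  also have "\<dots> = c" using ab h by (simp add: mult.assoc)
  finally show ?thesis .
qed

lemma group_inv_eq: "is_group_inverse a b \<Longrightarrow> group_inv a = b"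
  unfolding group_inv_def using group_inv_unique by blast

lemma mp_inv_unique:
  fixes a b c :: "'a::ring_1"
  assumes s: "involution s" and "is_mp_inverse s a b" "is_mp_inverse s a c" shows "b = c"
proof -
  have h: "a*b*a = a" "b*a*b = b" "s (a*b) = a*b" "s (b*a) = b*a"
     "a*c*a = a" "c*a*c = c" "s (a*c) = a*c" "s (c*a) = c*a"
    using assms by (auto simp: is_mp_inverse_def)
  have m: "\<And>x y. s (x*y) = s y * s x" using inv_mult[OF s] .
  have sa1: "s a = s a * (a*c)"
  proof -
    have "s a = s (a*c*a)" using h by simp
    also have "\<dots> = s a * s (a*c)" using m by simp
    finally show ?thesis using h by simp
  qed
  have "a*b = s b * s a" using h m by metis
  also have "\<dots> = s b * s a * (a*c)" using sa1 by (metis mult.assoc)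
  also have "\<dots> = a*b*a*c" using h m by (metis mult.assoc)
  also have "\<dots> = a*c" using h by simp
  finally have ab: "a*b = a*c" .
  have sa2: "s a = (c*a) * s a"
  proof -
    have "s a = s (a*(c*a))" using h by (simp add: mult.assoc)
    also have "\<dots> = s (c*a) * s a" using m by simp
    finally show ?thesis using h by simp
  qed
  have "b*a = s a * s b" using h m by metis
  also have "\<dots> = c*a*(s a * s b)" using sa2 by (metis mult.assoc)
  also have "\<dots> = c*a*(b*a)" using h m by metis
  also have "\<dots> = c*a" by (simp add: mult.assoc A3(2)[OF h(1)])
  finally have ba: "b*a = c*a" .
  have "b = b*a*b" using h by simp
  also have "\<dots> = c*a*c" using ab ba by (metis mult.assoc)
  finally show ?thesis using h by simp
qed


lemma mp_inv_eq: "involution s \<Longrightarrow> is_mp_inverse s a b \<Longrightarrow> mp_inv s a = b"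
  unfolding mp_inv_def using mp_inv_unique by blast

theorem corollary2p7:
  fixes s :: "'a::ring_1 \<Rightarrow> 'a" and a :: 'a
  assumes "involution s"
    and "group_invertible a" and "mp_invertible s a"
  shows "SEP s a \<longleftrightarrow> projection s (a ^ 2 * s a * group_inv a)"
proof -
  have st: "\<And>x y. s (x*y) = s y * s x" using inv_mult[OF assms(1)] .
  obtain g where G: "is_group_inverse a g" using assms(2) group_invertible_def by blast
  obtain m where M: "is_mp_inverse s a m" using assms(3) mp_invertible_def by blast
  have gi: "group_inv a = g" using group_inv_eq[OF G] .
  have mi: "mp_inv s a = m" using mp_inv_eq[OF assms(1) M] .
  have g1: "a*g*a = a" and g2: "g*a*g = g" and g3: "a*g = g*a" using G by (auto simp: is_group_inverse_def)
  have m1: "a*m*a = a" and m2: "m*a*m = m" and m3: "s (a*m) = a*m" and m4: "s (m*a) = m*a"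
    using M by (auto simp: is_mp_inverse_def)
  define p where "p = a*g"
  define x where "x = s a"
  have pp: "p*p = p" unfolding p_def by (simp add: mult.assoc A3(1)[OF g1])
  have ap: "a*p = a" unfolding p_def by (simp add: g3 A3(2)[OF g1])
  have pa: "p*a = a" unfolding p_def using g1 by simp
  have gp: "g*p = g" unfolding p_def by (simp add: A3(2)[OF g2])
  have pg: "p*g = g" unfolding p_def by (simp add: g3 g2)
  have e_eq: "a^2 * s a * group_inv a = a*a*x*g" by (simp add: gi x_def power2_eq_square)
  show ?thesis
  proof
    assume "SEP s a"
    then have xm: "x = m" and mg: "m = g" using gi mi by (auto simp: SEP_def x_def)
    have "a*a*x*g = a*(g*a*g)" using xm mg g3 by (simp add: mult.assoc)
    also have "\<dots> = p" using g2 p_def by simp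
    finally have ep: "a*a*x*g = p" .
    have "s p = p" using m3 mg p_def by simp
    then show "projection s (a ^ 2 * s a * group_inv a)"
      unfolding e_eq projection_def ep using pp by simp
  next
    assume "projection s (a ^ 2 * s a * group_inv a)"
    then have ee: "a*a*x*g*(a*a*x*g) = a*a*x*g" and es: "s (a*a*x*g) = a*a*x*g"
      unfolding e_eq projection_def by auto
    define q where "q = a*m"
    define r where "r = m*a"
    define b where "b = p*x*p"
    define y where "y = s m * r * p"
    have qs: "s q = q" using m3 q_def by simp
    have xq: "x*q = x"
    proof -
      have "s a = s (a*m*a)" by (simp add: m1)
      also have "\<dots> = s a * s (a*m)" by (simp add: st)
      finally show ?thesis by (simp add: m3 x_def q_def)
    qed
    have rx: "r*x = x"
    proof -
      have "s a = s (a*(m*a))" by (simp add: m1 mult.assoc[symmetric])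
      also have "\<dots> = s (m*a) * s a" by (simp add: st)
      finally show ?thesis by (simp add: m4 x_def r_def)
    qed
    have q_eq: "q = s m * x"
    proof -
      have "q = s (a*m)" by (simp add: q_def m3)
      also have "\<dots> = s m * x" by (simp add: st x_def)
      finally show ?thesis .
    qed
    have r_eq: "r = x * s m"
    proof -
      have "r = s (m*a)" by (simp add: r_def m4)
      also have "\<dots> = x * s m" by (simp add: st x_def)
      finally show ?thesis .
    qed
    have qsm: "q * s m = s m"
    proof -
      have "s m = s (m*a*m)" by (simp add: m2)
      also have "\<dots> = s m * (s a * s m)" by (simp add: st)
      finally show ?thesis by (simp add: q_eq x_def mult.assoc)
    qed
    have pq: "p*q = q" unfolding p_def q_def by (simp add: mult.assoc A3(1)[OF g1])
    have qp: "q*p = p" unfolding p_def q_def by (simp add: mult.assoc A3(1)[OF m1])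
    have pr: "p*r = p"
    proof -
      have "a*g*(m*a) = g*(a*m*a)" by (simp add: g3 mult.assoc)
      then show ?thesis unfolding p_def r_def by (simp add: m1 g3)
    qed
    have rp: "r*p = r" unfolding r_def by (simp add: mult.assoc ap)
    have gaa: "g*a*a = a" by (simp add: g3[symmetric] g1)
    have ggaa: "g*g*a*a = p"
    proof -
      have "g*g*a*a = g*(g*a*a)" by (simp add: mult.assoc)
      then show ?thesis by (simp add: gaa g3 p_def)
    qed
    have psm: "p * s m = s m"
    proof -
      have "p * s m = p * (q * s m)" by (simp add: qsm)
      also have "\<dots> = (p*q) * s m" by (simp only: mult.assoc)
      also have "\<dots> = s m" by (simp add: pq qsm)
      finally show ?thesis .
    qed
    have rr: "r*r = r" unfolding r_def by (simp add: mult.assoc A3(2)[OF m1])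
    have "g*g*(a*a*x*g*(a*a*x*g))*a = g*g*(a*a*x*g)*a" using ee by simp
    then have H: "(g*g*a*a)*x*(g*a*a)*x*(g*a) = (g*g*a*a)*x*(g*a)" by (simp add: mult.assoc)
    have idem: "p*x*a*x*p = p*x*p" using H unfolding ggaa gaa g3[symmetric] by (simp add: p_def g1)
    have bab: "b*a*b = b" using idem
      by (simp add: b_def mult.assoc A2[OF pa] A2[OF ap] pa ap)
    have by_: "b*y = p"
      by (simp add: b_def y_def mult.assoc A2[OF psm] rp A2[OF r_eq[symmetric]] rr pr)
    have bp: "b*p = b" by (simp add: b_def mult.assoc pp)
    have "b*a = b*a*p" by (simp add: mult.assoc ap)
    also have "\<dots> = b*a*(b*y)" by (simp add: by_)
    also have "\<dots> = (b*a*b)*y" by (simp add: mult.assoc)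
    also have "\<dots> = p" by (simp add: bab by_)
    finally have ba: "b*a = p" .
    have "b = b*p" by (simp add: bp)
    also have "\<dots> = (b*a)*g" by (simp add: p_def mult.assoc)
    also have "\<dots> = g" by (simp add: ba pg)
    finally have bg: "b = g" .
    have "a*a*x*g = a*(a*p)*x*(p*g)" by (simp add: ap pg)
    also have "\<dots> = a*a*b*g" by (simp add: b_def mult.assoc)
    also have "\<dots> = a*(p*g)" by (simp add: bg p_def mult.assoc)
    also have "\<dots> = p" using pg by (simp add: p_def)
    finally have ep: "a*a*x*g = p" .
    have ps: "s p = p" using es ep by simp
    have "q = s (p*q)" by (simp add: pq qs)
    also have "\<dots> = q*p" by (simp add: st qs ps)
    also have "\<dots> = p" by (simp add: qp)
    finally have qeqp: "q = p" .
    have MG: "is_mp_inverse s a g" unfolding is_mp_inverse_def using g1 g2 g3 ps p_def by simp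
    have mg: "m = g" using mp_inv_unique[OF assms(1) M MG] .
    have req: "r = p" using r_def mg g3 p_def by simp
    have "x = r*(x*q)" by (simp add: rx xq)
    also have "\<dots> = b" by (simp add: req qeqp b_def mult.assoc)
    finally have xg: "x = g" using bg by simp
    show "SEP s a" unfolding SEP_def using assms(2,3) gi mi mg xg x_def by simp
  qed
qed

end
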